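(* Let $p\ge1$, let $m\in\mathbb Z$ with $1\le m\le p$, and let $n\in\mathbb Z_{\ge0}$ with $m\ne n$. Then $[v(-m,n),\det\mathbf V_p]=0$ in $U(\mathcal L_r)$.
   Context: Fix an integer $d\ge 2$ and $r\in\mathbb{C}$. Let $\hat{\mathfrak h}$ be the complex Lie algebra with basis $\{v^i(m)\mid 1\le i\le d,\ m\in\mathbb{Z}\}\cup\{\mathbf c\}$ and bracket $[v^i(m),v^j(n)]=\delta_{m+n,0}\delta_{i,j}\,m\,\mathbf c$, $[\mathbf c,\hat{\mathfrak h}]=0$. In $A=U(\hat{\mathfrak h})/\langle \mathbf c-1\rangle$ let $v^{ij}(m,n)$ be the image of $v^i(m)v^j(n)$; then $v^{ij}(m,n)=v^{ji}(n,m)$ unless $i=j$ and $m=-n$, and $v^{ii}(m,-m)=v^{ii}(-m,m)+m$. Let $\mathcal B=\{v^{ii}(m,n)\mid 1\le i\le d,\ m\le n\}\cup\{v^{ij}(m,n)\mid 1\le i<j\le d,\ m,n\in\mathbb Z\}$; then $\mathcal B\cup\{1\}$ is linearly independent, $\mathcal L:=\mathrm{span}_{\mathbb C}\mathcal B\oplus\mathbb C\subset A$ contains every $v^{ij}(m,n)$ and is closed under $[x,y]=xy-yx$. With $\pi_1,\pi_2$ the projections of $\mathcal L$ onto $\mathrm{span}\,\mathcal B$ and onto $\mathbb C$, $[x,y]_r=\pi_1([x,y])+r\pi_2([x,y])$ is a Lie bracket on $\mathcal L$; call this Lie algebra $\mathcal L_r$; commutators in $U(\mathcal L_r)$ are taken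 with respect to $[\cdot,\cdot]_r$. Write $v(m,n)=v^{11}(m,n)$. The elements $v(-s,-t)$ with $s,t>0$ pairwise commute in $U(\mathcal L_r)$, so the determinant $\det\mathbf V_p=\sum_{\sigma\in\mathfrak S_p}\mathrm{sgn}(\sigma)\prod_{q=1}^p v(-q,-\sigma(q))\in U(\mathcal L_r)$ of the $p\times p$ matrix $\mathbf V_p=(v(-s,-t))_{1\le s,t\le p}$ is well defined. *)

theory Defs
  imports Complex_Main "HOL-Library.Poly_Mapping" "HOL-Combinatorics.Permutations"
begin

(* Basis of L: generators V i j m n stand for v^{ij}(m,n) (canonical forms only,
   see valid_gen); K stands for the basis vector 1 of the summand C of L. *)
datatype gen = V nat nat int int | K

definition valid_gen :: "nat \<Rightarrow> gen \<Rightarrow> bool" where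
  "valid_gen d g = (case g of
      V i j m n \<Rightarrow> 1 \<le> i \<and> i \<le> d \<and> 1 \<le> j \<and> j \<le> d \<and> (i < j \<or> (i = j \<and> m \<le> n))
    | K \<Rightarrow> True)"

type_synonym Lelem = "gen \<Rightarrow>\<^sub>0 complex"

definition sc :: "complex \<Rightarrow> ('a \<Rightarrow>\<^sub>0 complex) \<Rightarrow> ('a \<Rightarrow>\<^sub>0 complex)" where
  "sc a x = Poly_Mapping.map (\<lambda>c. a * c) x"

(* v^{ij}(m,n) written in the basis B \<union> {1} of L *)
definition vL :: "nat \<Rightarrow> nat \<Rightarrow> int \<Rightarrow> int \<Rightarrow> Lelem" where
  "vL i j m n =
     (if i < j then Poly_Mapping.single (V i j m n) 1
      else if j < i then Poly_Mapping.single (V j i n m) 1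
      else if m \<le> n then Poly_Mapping.single (V i i m n) 1
      else if m = - n then Poly_Mapping.single (V i i n m) 1 + Poly_Mapping.single K (of_int m)
      else Poly_Mapping.single (V i i n m) 1)"

(* commutator xy - yx in A of two basis elements, expressed in the basis of L
   (K = the unit 1 of A); obtained from [ab,cd] = [b,c]ad + [b,d]ac + [a,c]db + [a,d]cb *)
fun brA :: "gen \<Rightarrow> gen \<Rightarrow> Lelem" where
  "brA (V i j m n) (V k l p q) =
      sc (if j = k \<and> n + p = 0 then of_int n else 0) (vL i l m q)
    + sc (if j = l \<and> n + q = 0 then of_int n else 0) (vL i k m p)
    + sc (if i = k \<and> m + p = 0 then of_int m else 0) (vL l j q n)
    + sc (if i = l \<and> m + q = 0 then of_int m else 0) (vL k j p n)"
| "brA _ _ = 0"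

(* the bracket [x,y]_r = \<pi>1([x,y]) + r \<pi>2([x,y]) of L_r on basis elements *)
definition brL :: "complex \<Rightarrow> gen \<Rightarrow> gen \<Rightarrow> Lelem" where
  "brL r g h = Poly_Mapping.update K (r * Poly_Mapping.lookup (brA g h) K) (brA g h)"

datatype 'a word = Wd "'a list"

instantiation word :: (type) monoid_add
begin
definition zero_word_def: "0 = Wd []"
fun plus_word :: "'a word \<Rightarrow> 'a word \<Rightarrow> 'a word" where
  "plus_word (Wd xs) (Wd ys) = Wd (xs @ ys)"
instance
proof
  fix a b c :: "'a word"
  show "a + b + c = a + (b + c)" by (cases a; cases b; cases c) auto
  show "0 + a = a" by (cases a) (auto simp: zero_word_def)
  show "a + 0 = a" by (cases a) (auto simp: zero_word_def)
qed
end

(* tensor algebra T(L) over C: finitely supported functions on words in the basis *)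
type_synonym Telem = "gen word \<Rightarrow>\<^sub>0 complex"

definition gT :: "gen \<Rightarrow> Telem" where
  "gT g = Poly_Mapping.single (Wd [g]) 1"

definition emb :: "Lelem \<Rightarrow> Telem" where
  "emb x = (\<Sum>g\<in>Poly_Mapping.keys x. Poly_Mapping.single (Wd [g]) (Poly_Mapping.lookup x g))"

(* defining relations of U(L_r) = T(L)/I; generators outside the basis of L are killed *)
definition Urels :: "nat \<Rightarrow> complex \<Rightarrow> Telem set" where
  "Urels d r = {gT g * gT h - gT h * gT g - emb (brL r g h) | g h. valid_gen d g \<and> valid_gen d h}
               \<union> {gT g | g. \<not> valid_gen d g}"

inductive_set Uideal :: "nat \<Rightarrow> complex \<Rightarrow> Telem set" for d r where
  zero: "0 \<in> Uideal d r"
| gen: "x \<in> Urels d r \<Longrightarrow> a * x * b \<in> Uideal d r"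
| add: "x \<in> Uideal d r \<Longrightarrow> y \<in> Uideal d r \<Longrightarrow> x + y \<in> Uideal d r"

definition vT :: "int \<Rightarrow> int \<Rightarrow> Telem" where
  "vT m n = emb (vL 1 1 m n)"

definition detV :: "nat \<Rightarrow> Telem" where
  "detV p = (\<Sum>\<sigma> \<in> {\<sigma>. \<sigma> permutes {1..p}}.
      of_int (sign \<sigma>) * prod_list (map (\<lambda>q. vT (- int q) (- int (\<sigma> q))) [1..<p+1]))"

end

theory Submission imports Defs begin


locale cgi =
  fixes J :: "'a::ring_1 set" and hf :: 'a
  assumes J0: "0 \<in> J" and Jadd: "x \<in> J \<Longrightarrow> y \<in> J \<Longrightarrow> x + y \<in> J"
    and Jneg: "x \<in> J \<Longrightarrow> - x \<in> J"
    and Jl: "x \<in> J \<Longrightarrow> a * x \<in> J" and Jr: "x \<in> J \<Longrightarrow> x * a \<in> J"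
    and half: "hf + hf = 1"
begin

definition cg :: "'a \<Rightarrow> 'a \<Rightarrow> bool" where "cg x y \<longleftrightarrow> x - y \<in> J"

lemma cg_refl[simp]: "cg x x" by (simp add: cg_def J0)
lemma cg_sym: "cg x y \<Longrightarrow> cg y x"
proof -
  assume "cg x y" then have "- (x - y) \<in> J" unfolding cg_def by (rule Jneg)
  moreover have "- (x - y) = y - x" by simp
  ultimately show ?thesis unfolding cg_def by simp
qed
lemma cg_trans: "cg x y \<Longrightarrow> cg y z \<Longrightarrow> cg x z"
proof -
  assume "cg x y" "cg y z" then have "(x - y) + (y - z) \<in> J" unfolding cg_def by (rule Jadd)
  moreover have "(x - y) + (y - z) = x - z" by simp
  ultimately show ?thesis unfolding cg_def by simp
qed
lemma cg_add: "cg x y \<Longrightarrow> cg x' y' \<Longrightarrow> cg (x + x') (y + y')"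
proof -
  assume "cg x y" "cg x' y'" then have "(x - y) + (x' - y') \<in> J" unfolding cg_def by (rule Jadd)
  moreover have "(x - y) + (x' - y') = (x + x') - (y + y')" by simp
  ultimately show ?thesis unfolding cg_def by simp
qed
lemma cg_neg: "cg x y \<Longrightarrow> cg (- x) (- y)"
proof -
  assume "cg x y" then have "- (x - y) \<in> J" unfolding cg_def by (rule Jneg)
  moreover have "- (x - y) = - x - - y" by simp
  ultimately show ?thesis unfolding cg_def by simp
qed
lemma cg_diff: "cg x y \<Longrightarrow> cg x' y' \<Longrightarrow> cg (x - x') (y - y')"
  using cg_add[OF _ cg_neg, of x y x' y'] by simp
lemma cg_mult: "cg x y \<Longrightarrow> cg x' y' \<Longrightarrow> cg (x * x') (y * y')"
proof -
  assume a: "cg x y" "cg x' y'"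
  have "(x - y) * x' \<in> J" using a(1) unfolding cg_def by (rule Jr)
  moreover have "y * (x' - y') \<in> J" using a(2) unfolding cg_def by (rule Jl)
  ultimately have "(x - y) * x' + y * (x' - y') \<in> J" by (rule Jadd)
  moreover have "x * x' - y * y' = (x - y) * x' + y * (x' - y')" by (simp add: algebra_simps)
  ultimately show ?thesis unfolding cg_def by simp
qed
lemma cg_multl: "cg x y \<Longrightarrow> cg (a * x) (a * y)" by (rule cg_mult[OF cg_refl])
lemma cg_multr: "cg x y \<Longrightarrow> cg (x * a) (y * a)" by (rule cg_mult[OF _ cg_refl])
lemma cg_sum: "(\<And>i. i \<in> S \<Longrightarrow> cg (f i) (g i)) \<Longrightarrow> cg (sum f S) (sum g S)"
  by (induction S rule: infinite_finite_induct) (auto intro: cg_add)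
lemma cg_eq_trans: "cg x y \<Longrightarrow> y = z \<Longrightarrow> cg x z" by simp
lemma cg_zero_half: "cg (x + x) 0 \<Longrightarrow> cg x 0"
proof -
  assume "cg (x + x) 0"
  then have "hf * (x + x) \<in> J" using Jl unfolding cg_def by simp
  moreover have "hf * (x + x) = (hf + hf) * x" by (simp add: algebra_simps)
  moreover note half
  ultimately show ?thesis unfolding cg_def by simp
qed

definition comm :: "'a \<Rightarrow> 'a \<Rightarrow> bool" where "comm a b \<longleftrightarrow> cg (a * b) (b * a)"

lemma comm_prod: "(\<And>a. a \<in> set xs \<Longrightarrow> comm a y) \<Longrightarrow> comm (prod_list xs) y"
proof (induction xs)
  case Nil then show ?case by (simp add: comm_def)
next
  case (Cons a xs)
  have h1: "cg (prod_list xs * y) (y * prod_list xs)" using Cons by (simp add: comm_def)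
  have h2: "cg (a * y) (y * a)" using Cons by (simp add: comm_def)
  have "cg (a * (prod_list xs * y)) (a * (y * prod_list xs))" by (rule cg_multl[OF h1])
  moreover have "cg ((a * y) * prod_list xs) ((y * a) * prod_list xs)" by (rule cg_multr[OF h2])
  ultimately show ?case unfolding comm_def by (auto simp: mult.assoc intro: cg_trans)
qed

lemma perm_prod:
  assumes "\<And>a b. a \<in> S \<Longrightarrow> b \<in> S \<Longrightarrow> comm a b"
  shows "mset xs = mset ys \<Longrightarrow> set xs \<subseteq> S \<Longrightarrow> cg (prod_list xs) (prod_list ys)"
proof (induction xs arbitrary: ys)
  case Nil then show ?case by simp
next
  case (Cons x xs)
  have "x \<in> set ys" using Cons.prems(1) by (metis list.set_intros(1) set_mset_mset)
  then obtain ys1 ys2 where ys: "ys = ys1 @ x # ys2" by (meson split_list)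
  have m: "mset xs = mset (ys1 @ ys2)" using Cons.prems(1) ys by simp
  have IH: "cg (prod_list xs) (prod_list (ys1 @ ys2))" by (rule Cons.IH[OF m]) (use Cons.prems(2) in simp)
  have sy: "set ys \<subseteq> S" using Cons.prems by (metis mset_eq_setD)
  have "comm (prod_list ys1) x"
    by (rule comm_prod) (use sy ys assms Cons.prems(2) in auto)
  then have "cg (x * prod_list ys1 * prod_list ys2) (prod_list ys1 * x * prod_list ys2)"
    unfolding comm_def by (intro cg_multr) (rule cg_sym)
  moreover have "cg (x * prod_list xs) (x * prod_list (ys1 @ ys2))" by (rule cg_multl[OF IH])
  ultimately show ?case using ys by (auto simp: mult.assoc intro: cg_trans)
qed

definition PP :: "(nat \<Rightarrow> nat \<Rightarrow> 'a) \<Rightarrow> (nat \<Rightarrow> nat) \<Rightarrow> nat list \<Rightarrow> 'a" where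
  "PP G s L = prod_list (map (\<lambda>q. G q (s q)) L)"

lemma PP_cong: "(\<And>q. q \<in> set L \<Longrightarrow> G q (s q) = H q (s q)) \<Longrightarrow> PP G s L = PP H s L"
  unfolding PP_def by (induction L) auto

lemma leibniz:
  fixes F FA FB :: "nat \<Rightarrow> nat \<Rightarrow> 'a" and s :: "nat \<Rightarrow> nat"
  assumes cent: "\<And>y. c * y = y * c"
    and FA: "\<And>q. q \<noteq> nn \<Longrightarrow> FA q = F q" and FB: "\<And>q k. k \<noteq> nn \<Longrightarrow> FB q k = F q k"
    and inj: "inj s"
  shows "distinct L \<Longrightarrow> (\<And>q. q \<in> set L \<Longrightarrow> cg (x * F q (s q) - F q (s q) * x)
            (c * ((if q = nn then FA q (s q) else 0) + (if s q = nn then FB q (s q) else 0)))) \<Longrightarrow>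
     cg (x * PP F s L - PP F s L * x)
        (c * ((if nn \<in> set L then PP FA s L else 0) + (if nn \<in> s ` set L then PP FB s L else 0)))"
proof (induction L)
  case Nil then show ?case by (simp add: PP_def)
next
  case (Cons q L)
  define a where "a = F q (s q)"
  define P' where "P' = PP F s L"
  define A where "A = (if q = nn then FA q (s q) else 0)"
  define B where "B = (if s q = nn then FB q (s q) else 0)"
  define R where "R = (if nn \<in> set L then PP FA s L else 0) + (if nn \<in> s ` set L then PP FB s L else 0)"
  have IH: "cg (x * P' - P' * x) (c * R)" unfolding P'_def R_def
  proof (rule Cons.IH)
    show "distinct L" using Cons.prems(1) by simp
    fix q' assume "q' \<in> set L"
    then show "cg (x * F q' (s q') - F q' (s q') * x)
            (c * ((if q' = nn then FA q' (s q') else 0) + (if s q' = nn then FB q' (s q') else 0)))"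
      by (intro Cons.prems(2)) simp
  qed
  have h: "cg (x * a - a * x) (c * (A + B))" unfolding a_def A_def B_def by (rule Cons.prems(2)) simp
  have e1: "x * PP F s (q # L) - PP F s (q # L) * x = (x * a - a * x) * P' + a * (x * P' - P' * x)"
    unfolding PP_def P'_def a_def by (simp add: algebra_simps)
  have "cg ((x * a - a * x) * P' + a * (x * P' - P' * x)) (c * (A + B) * P' + a * (c * R))"
    by (intro cg_add cg_mult h IH cg_refl)
  moreover have "c * (A + B) * P' + a * (c * R) =
     c * ((if nn \<in> set (q # L) then PP FA s (q # L) else 0) + (if nn \<in> s ` set (q # L) then PP FB s (q # L) else 0))"
  proof -
    have qL: "q \<notin> set L" using Cons.prems by simp
    have PPc: "PP G s (q#L) = G q (s q) * PP G s L" for G by (simp add: PP_def)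
    have PA: "nn \<notin> set L \<Longrightarrow> PP FA s L = P'"
      unfolding P'_def
    proof (rule PP_cong)
      fix q' assume "nn \<notin> set L" "q' \<in> set L"
      then have "q' \<noteq> nn" by auto
      then show "FA q' (s q') = F q' (s q')" using FA by simp
    qed
    have PB: "nn \<notin> s ` set L \<Longrightarrow> PP FB s L = P'"
      unfolding P'_def
    proof (rule PP_cong)
      fix q' assume "nn \<notin> s ` set L" "q' \<in> set L"
      then have "s q' \<noteq> nn" by auto
      then show "FB q' (s q') = F q' (s q')" using FB by simp
    qed
    have X: "(if nn \<in> set (q # L) then PP FA s (q # L) else 0) = A * P' + a * (if nn \<in> set L then PP FA s L else 0)"
    proof (cases "q = nn")
      case True then show ?thesis unfolding PPc A_def using qL PA by simp
    next
      case False then show ?thesis by (simp add: PPc A_def a_def FA[OF False])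
    qed
    have sq: "s q = nn \<Longrightarrow> nn \<notin> s ` set L"
    proof
      assume "s q = nn" "nn \<in> s ` set L"
      then obtain q' where "q' \<in> set L" "s q' = s q" by auto
      then show False using qL inj by (metis injD)
    qed
    have Y: "(if nn \<in> s ` set (q # L) then PP FB s (q # L) else 0) = B * P' + a * (if nn \<in> s ` set L then PP FB s L else 0)"
    proof (cases "s q = nn")
      case True then show ?thesis unfolding PPc B_def using sq PB by simp
    next
      case False then show ?thesis by (simp add: PPc B_def a_def FB[OF False])
    qed
    have ac: "a * (c * z) = c * (a * z)" for z
    proof -
      have "a * (c * z) = (a * c) * z" by (rule mult.assoc[symmetric])
      also have "a * c = c * a" by (rule cent[symmetric])
      finally show ?thesis by (simp only: mult.assoc)
    qed
    show ?thesis unfolding X Y R_def ac by (simp only: distrib_left distrib_right mult.assoc add.assoc add.left_commute)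
  qed
  ultimately show ?case using e1 by simp
qed

lemma half_zero: "(x::'a) = - x \<Longrightarrow> x = 0"
proof -
  assume e: "x = - x"
  have "hf * (x + x) = (hf + hf) * x" by (simp only: distrib_left distrib_right)
  also have "\<dots> = x" by (simp only: half mult_1)
  finally have "x = hf * (x + - x)" using e by simp
  then show "x = 0" by simp
qed

lemma det_cols:
  fixes G :: "nat \<Rightarrow> nat \<Rightarrow> 'a"
  assumes ab: "a \<in> {1..p}" "b \<in> {1..p}" "a \<noteq> b" and col: "\<And>q. G q a = G q b"
  shows "(\<Sum>\<sigma> \<in> {\<sigma>. \<sigma> permutes {1..p}}. of_int (sign \<sigma>) * PP G \<sigma> [1..<p+1]) = 0"
proof -
  let ?t = "transpose a b"
  let ?S = "{\<sigma>. \<sigma> permutes {1..p}}"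
  define f where "f = (\<lambda>\<sigma>. of_int (sign \<sigma>) * PP G \<sigma> [1..<p+1])"
  have tp: "?t permutes {1..p}" using ab by (simp add: permutes_swap_id)
  have tt: "?t \<circ> (?t \<circ> \<sigma>) = \<sigma>" for \<sigma> by (auto simp: fun_eq_iff)
  have cp: "\<sigma> \<in> ?S \<Longrightarrow> ?t \<circ> \<sigma> \<in> ?S" for \<sigma> using permutes_compose[OF _ tp, of \<sigma>] by simp
  have "sum f ?S = sum (\<lambda>\<sigma>. f (?t \<circ> \<sigma>)) ?S"
    by (rule sum.reindex_bij_witness[where i="\<lambda>\<sigma>. ?t \<circ> \<sigma>" and j="\<lambda>\<sigma>. ?t \<circ> \<sigma>"])
       (simp_all only: tt cp)
  also have "\<dots> = sum (\<lambda>\<sigma>. - f \<sigma>) ?S"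
  proof (rule sum.cong[OF refl])
    fix \<sigma> assume "\<sigma> \<in> ?S"
    then have sp: "\<sigma> permutes {1..p}" by simp
    have "sign (?t \<circ> \<sigma>) = sign ?t * sign \<sigma>"
      by (rule sign_compose[OF permutes_imp_permutation[OF _ tp] permutes_imp_permutation[OF _ sp]]) simp_all
    also have "sign ?t = -1" using ab(3) by (simp add: sign_swap_id)
    finally have s1: "sign (?t \<circ> \<sigma>) = - sign \<sigma>" by (simp only: mult_minus1)
    have "G q (?t (\<sigma> q)) = G q (\<sigma> q)" for q
      using col[of q] by (cases "\<sigma> q = a"; cases "\<sigma> q = b") (simp_all add: transpose_def)
    then have "PP G (?t \<circ> \<sigma>) [1..<p+1] = PP G \<sigma> [1..<p+1]"
      unfolding PP_def by simp
    then show "f (?t \<circ> \<sigma>) = - f \<sigma>" unfolding f_def s1 by simp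
  qed
  also have "\<dots> = - sum f ?S" by (rule sum_negf)
  finally have "sum f ?S = 0" by (rule half_zero)
  then show ?thesis unfolding f_def .
qed

lemma det_rows:
  fixes G :: "nat \<Rightarrow> nat \<Rightarrow> 'a"
  assumes ab: "a \<in> {1..p}" "b \<in> {1..p}" "a \<noteq> b" and row: "G a = G b"
    and cm: "\<And>x y. x \<in> S \<Longrightarrow> y \<in> S \<Longrightarrow> comm x y"
    and inS: "\<And>q k. q \<in> {1..p} \<Longrightarrow> k \<in> {1..p} \<Longrightarrow> G q k \<in> S"
  shows "cg (\<Sum>\<sigma> \<in> {\<sigma>. \<sigma> permutes {1..p}}. of_int (sign \<sigma>) * PP G \<sigma> [1..<p+1]) 0"
proof -
  let ?t = "transpose a b"
  let ?S = "{\<sigma>. \<sigma> permutes {1..p}}"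
  define f where "f = (\<lambda>\<sigma>. of_int (sign \<sigma>) * PP G \<sigma> [1..<p+1])"
  have tp: "?t permutes {1..p}" using ab by (simp add: permutes_swap_id)
  have Gt: "G (?t q) = G q" for q using row by (cases "q = a"; cases "q = b") (simp_all add: transpose_def)
  have mL: "mset [1..<p+1] = mset_set {1..p}" by (simp only: mset_upt Suc_eq_plus1[symmetric] atLeastLessThanSuc_atLeastAtMost)
  have "sum f ?S = sum (\<lambda>\<sigma>. f (\<sigma> \<circ> ?t)) ?S"
    by (rule sum_permutations_compose_right[OF tp])
  moreover have "cg (sum (\<lambda>\<sigma>. f (\<sigma> \<circ> ?t)) ?S) (sum (\<lambda>\<sigma>. - f \<sigma>) ?S)"
  proof (rule cg_sum)
    fix \<sigma> assume "\<sigma> \<in> ?S"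
    then have sp: "\<sigma> permutes {1..p}" by simp
    have "sign (\<sigma> \<circ> ?t) = sign \<sigma> * sign ?t"
      by (rule sign_compose[OF permutes_imp_permutation[OF _ sp] permutes_imp_permutation[OF _ tp]]) simp_all
    also have "sign ?t = -1" using ab(3) by (simp add: sign_swap_id)
    finally have s1: "sign (\<sigma> \<circ> ?t) = - sign \<sigma>" by (simp only: mult_minus1_right)
    let ?g = "\<lambda>q. G q (\<sigma> q)"
    have "map (\<lambda>q. G q ((\<sigma> \<circ> ?t) q)) [1..<p+1] = map (?g \<circ> ?t) [1..<p+1]"
      by (simp add: Gt)
    then have "mset (map (\<lambda>q. G q ((\<sigma> \<circ> ?t) q)) [1..<p+1]) = image_mset ?g (image_mset ?t (mset [1..<p+1]))"
      by (simp only: mset_map image_mset.compositionality)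
    also have "image_mset ?t (mset [1..<p+1]) = mset [1..<p+1]"
      unfolding mL by (rule permutes_image_mset[OF tp])
    finally have mm: "mset (map (\<lambda>q. G q ((\<sigma> \<circ> ?t) q)) [1..<p+1]) = mset (map ?g [1..<p+1])"
      by (simp only: mset_map)
    have sS: "set (map (\<lambda>q. G q ((\<sigma> \<circ> ?t) q)) [1..<p+1]) \<subseteq> S"
    proof
      fix y assume "y \<in> set (map (\<lambda>q. G q ((\<sigma> \<circ> ?t) q)) [1..<p+1])"
      then obtain q where q0: "q \<in> set [1..<p+1]" "y = G q (\<sigma> (?t q))" by auto
      then have q: "q \<in> {1..p}" "y = G q (\<sigma> (?t q))" by auto
      have "?t q \<in> {1..p}" using permutes_in_image[OF tp] q(1) by simp
      then have "\<sigma> (?t q) \<in> {1..p}" using permutes_in_image[OF sp] by simp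
      then show "y \<in> S" using inS q by simp
    qed
    have "cg (PP G (\<sigma> \<circ> ?t) [1..<p+1]) (PP G \<sigma> [1..<p+1])"
      using perm_prod[OF cm mm sS] unfolding PP_def by simp
    then have "cg (of_int (sign \<sigma>) * PP G (\<sigma> \<circ> ?t) [1..<p+1]) (of_int (sign \<sigma>) * PP G \<sigma> [1..<p+1])"
      by (rule cg_multl)
    then have "cg (- (of_int (sign \<sigma>) * PP G (\<sigma> \<circ> ?t) [1..<p+1])) (- (of_int (sign \<sigma>) * PP G \<sigma> [1..<p+1]))"
      by (rule cg_neg)
    then show "cg (f (\<sigma> \<circ> ?t)) (- f \<sigma>)" unfolding f_def s1 by (simp only: of_int_minus mult_minus_left)
  qed
  ultimately have "cg (sum f ?S) (- sum f ?S)" by (simp only: sum_negf)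
  then have "cg (sum f ?S + sum f ?S) 0" unfolding cg_def by simp
  then have "cg (sum f ?S) 0" by (rule cg_zero_half)
  then show ?thesis unfolding f_def .
qed

end


lemma Uideal_neg: "x \<in> Uideal d r \<Longrightarrow> - x \<in> Uideal d r"
proof (induction rule: Uideal.induct)
  case zero then show ?case by (simp add: Uideal.zero)
next
  case (gen x a b)
  have "- (a * x * b) = (- a) * x * b" by simp
  then show ?case using Uideal.gen[OF gen] by metis
next
  case (add x y) then show ?case using Uideal.add[of "-x" d r "-y"] by (simp add: add.commute)
qed

lemma Uideal_l: "x \<in> Uideal d r \<Longrightarrow> c * x \<in> Uideal d r"
proof (induction rule: Uideal.induct)
  case zero then show ?case by (simp add: Uideal.zero)
next
  case (gen x a b)
  have "c * (a * x * b) = (c * a) * x * b" by (simp add: mult.assoc)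
  then show ?case using Uideal.gen[OF gen] by metis
next
  case (add x y) then show ?case using Uideal.add by (metis distrib_left)
qed

lemma Uideal_r: "x \<in> Uideal d r \<Longrightarrow> x * c \<in> Uideal d r"
proof (induction rule: Uideal.induct)
  case zero then show ?case by (simp add: Uideal.zero)
next
  case (gen x a b)
  have "(a * x * b) * c = a * x * (b * c)" by (simp add: mult.assoc)
  then show ?case using Uideal.gen[OF gen] by metis
next
  case (add x y) then show ?case using Uideal.add by (metis distrib_right)
qed

lemma U_cgi: "cgi (Uideal d r) (Poly_Mapping.single 0 (1/2))"
proof
  show "0 \<in> Uideal d r" by (rule Uideal.zero)
  show "Poly_Mapping.single 0 (1/2) + Poly_Mapping.single 0 (1/2) = (1::Telem)"
    by (simp add: single_add[symmetric])
qed (auto intro: Uideal.add Uideal_neg Uideal_l Uideal_r)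

lemma rel_cg:
  assumes "valid_gen d g" "valid_gen d h"
  shows "cgi.cg (Uideal d r) (gT g * gT h - gT h * gT g) (emb (brL r g h))"
proof -
  have "gT g * gT h - gT h * gT g - emb (brL r g h) \<in> Urels d r" unfolding Urels_def using assms by blast
  then have "1 * (gT g * gT h - gT h * gT g - emb (brL r g h)) * 1 \<in> Uideal d r" by (rule Uideal.gen)
  then show ?thesis unfolding cgi.cg_def[OF U_cgi] by simp
qed

lemma emb_alt: "finite S \<Longrightarrow> Poly_Mapping.keys x \<subseteq> S \<Longrightarrow>
   emb x = (\<Sum>g\<in>S. Poly_Mapping.single (Wd [g]) (Poly_Mapping.lookup x g))"
  unfolding emb_def by (rule sum.mono_neutral_left) (auto simp: in_keys_iff)

lemma emb_add: "emb (x + y) = emb x + emb y"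
proof -
  let ?S = "Poly_Mapping.keys x \<union> Poly_Mapping.keys y"
  have "emb (x + y) = (\<Sum>g\<in>?S. Poly_Mapping.single (Wd [g]) (Poly_Mapping.lookup (x + y) g))"
    by (rule emb_alt) (auto dest: keys_add[THEN subsetD])
  also have "\<dots> = (\<Sum>g\<in>?S. Poly_Mapping.single (Wd [g]) (Poly_Mapping.lookup x g))
     + (\<Sum>g\<in>?S. Poly_Mapping.single (Wd [g]) (Poly_Mapping.lookup y g))"
    by (simp add: lookup_add single_add sum.distrib)
  also have "\<dots> = emb x + emb y"
  proof -
    have "emb x = (\<Sum>g\<in>?S. Poly_Mapping.single (Wd [g]) (Poly_Mapping.lookup x g))" by (rule emb_alt) auto
    moreover have "emb y = (\<Sum>g\<in>?S. Poly_Mapping.single (Wd [g]) (Poly_Mapping.lookup y g))" by (rule emb_alt) auto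
    ultimately show ?thesis by simp
  qed
  finally show ?thesis .
qed

lemma emb_sc: "emb (sc c x) = Poly_Mapping.single 0 c * emb x"
proof -
  have lk: "Poly_Mapping.lookup (sc c x) g = c * Poly_Mapping.lookup x g" for g
    unfolding sc_def by (simp add: map.rep_eq when_def)
  have "emb (sc c x) = (\<Sum>g\<in>Poly_Mapping.keys x. Poly_Mapping.single (Wd [g]) (Poly_Mapping.lookup (sc c x) g))"
    by (rule emb_alt) (auto simp: in_keys_iff lk)
  also have "\<dots> = (\<Sum>g\<in>Poly_Mapping.keys x. Poly_Mapping.single 0 c * Poly_Mapping.single (Wd [g]) (Poly_Mapping.lookup x g))"
    by (simp add: lk mult_single)
  also have "\<dots> = Poly_Mapping.single 0 c * emb x" by (simp add: emb_def sum_distrib_left)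
  finally show ?thesis .
qed

lemma emb_single: "emb (Poly_Mapping.single g 1) = gT g"
  unfolding emb_def gT_def by simp

lemma emb_zero: "emb 0 = 0" unfolding emb_def by simp

lemma sc_zero: "sc 0 x = 0"
  unfolding sc_def by (rule poly_mapping_eqI) (simp add: map.rep_eq when_def)

lemma vL_negK: "a < 0 \<Longrightarrow> b < 0 \<Longrightarrow> Poly_Mapping.lookup (vL 1 1 a b) K = 0"
  unfolding vL_def by (simp add: lookup_single)

lemma vT_neg: "a < 0 \<Longrightarrow> b < 0 \<Longrightarrow> vT a b = gT (V 1 1 (min a b) (max a b))"
  unfolding vT_def vL_def by (auto simp: emb_single)

lemma vT_x: "m \<ge> 1 \<Longrightarrow> n \<ge> 0 \<Longrightarrow> vT (- m) n = gT (V 1 1 (- m) n)"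
  unfolding vT_def vL_def by (auto simp: emb_single)

lemma brL_noK: "Poly_Mapping.lookup (brA g h) K = 0 \<Longrightarrow> brL r g h = brA g h"
  unfolding brL_def by (rule poly_mapping_eqI) (simp add: lookup_update)

lemma lookup_sc: "Poly_Mapping.lookup (sc c x) g = c * Poly_Mapping.lookup x g"
  unfolding sc_def by (simp add: map.rep_eq when_def)

lemma comm_neg:
  assumes "2 \<le> d" "a < 0" "b < 0" "a' < 0" "b' < 0"
  shows "cgi.comm (Uideal d r) (vT a b) (vT a' b')"
proof -
  let ?h1 = "V 1 1 (min a b) (max a b)" and ?h2 = "V 1 1 (min a' b') (max a' b')"
  have v: "valid_gen d ?h1" "valid_gen d ?h2" using assms unfolding valid_gen_def by auto
  have "brA ?h1 ?h2 = 0" using assms by (auto simp: sc_zero max_def min_def)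
  then have "brL r ?h1 ?h2 = 0" using brL_noK by simp
  then show ?thesis using rel_cg[OF v, of r] assms
    unfolding cgi.comm_def[OF U_cgi] cgi.cg_def[OF U_cgi] by (simp add: vT_neg emb_zero)
qed

lemma comm_D:
  fixes m n s t :: int
  assumes "2 \<le> d" "m \<ge> 1" "n \<ge> 0" "s \<ge> 1" "t \<ge> 1"
  shows "cgi.cg (Uideal d r) (vT (- m) n * vT (- s) (- t) - vT (- s) (- t) * vT (- m) n)
     (of_int n * ((if s = n then vT (- m) (- t) else 0) + (if t = n then vT (- m) (- s) else 0)))"
proof -
  let ?g = "V 1 1 (- m) n" and ?h = "V 1 1 (min (-s) (-t)) (max (-s) (-t))"
  have v: "valid_gen d ?g" "valid_gen d ?h" using assms unfolding valid_gen_def by auto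
  have bA: "brA ?g ?h = sc (if n + min (-s) (-t) = 0 then of_int n else 0) (vL 1 1 (- m) (max (-s) (-t)))
      + sc (if n + max (-s) (-t) = 0 then of_int n else 0) (vL 1 1 (- m) (min (-s) (-t)))"
    using assms by (auto simp: sc_zero max_def min_def)
  have mn: "min (-s) (-t) < 0" "max (-s) (-t) < 0" "- m < 0" using assms by auto
  have K: "Poly_Mapping.lookup (brA ?g ?h) K = 0"
    unfolding bA lookup_add lookup_sc vL_negK[OF mn(3) mn(1)] vL_negK[OF mn(3) mn(2)] by simp
  have e: "emb (brL r ?g ?h) = of_int n * ((if s = n then vT (- m) (- t) else 0) + (if t = n then vT (- m) (- s) else 0))"
    unfolding brL_noK[OF K] bA emb_add emb_sc vT_def[symmetric]
    using assms by (auto simp: max_def min_def algebra_simps)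
  show ?thesis using rel_cg[OF v, of r] assms unfolding e by (simp add: vT_neg vT_x)
qed



lemma vT_sym: "a < 0 \<Longrightarrow> b < 0 \<Longrightarrow> vT a b = vT b a"
  by (simp add: vT_neg min.commute max.commute)

theorem lemma6p2:
  fixes d p :: nat and r :: complex and m n :: int
  assumes "2 \<le> d" and "1 \<le> p" and "1 \<le> m" and "m \<le> int p" and "0 \<le> n" and "m \<noteq> n"
  shows "vT (- m) n * detV p - detV p * vT (- m) n \<in> Uideal d r"
proof -
  interpret U: cgi "Uideal d r" "Poly_Mapping.single 0 (1/2)" by (rule U_cgi)
  define x where "x = vT (- m) n"
  define mm where "mm = nat m"
  define nn where "nn = nat n"
  define F where "F = (\<lambda>q k::nat. vT (- int q) (- int k))"
  define FA where "FA = (\<lambda>q k. if q = nn then F mm k else F q k)"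
  define FB where "FB = (\<lambda>q k. if k = nn then F q mm else F q k)"
  define c :: Telem where "c = of_int n"
  define L where "L = [1..<p+1]"
  let ?P = "{\<sigma>. \<sigma> permutes {1..p}}"
  have m_eq: "m = int mm" and n_eq: "n = int nn" using assms unfolding mm_def nn_def by auto
  have mm_in: "mm \<in> {1..p}" using assms m_eq by auto
  have mn: "mm \<noteq> nn" using assms m_eq n_eq by auto
  have setL: "set L = {1..p}" unfolding L_def by auto
  have cent: "\<And>y. c * y = y * c" unfolding c_def by (rule mult_of_int_commute)
  have FA1: "\<And>q. q \<noteq> nn \<Longrightarrow> FA q = F q" unfolding FA_def by auto
  have FB1: "\<And>q k. k \<noteq> nn \<Longrightarrow> FB q k = F q k" unfolding FB_def by auto
  have det: "detV p = (\<Sum>\<sigma>\<in>?P. of_int (sign \<sigma>) * U.PP F \<sigma> L)"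
    unfolding detV_def U.PP_def F_def L_def by simp
  have trm: "U.cg (x * U.PP F \<sigma> L - U.PP F \<sigma> L * x)
       (c * ((if nn \<in> {1..p} then U.PP FA \<sigma> L else 0) + (if nn \<in> {1..p} then U.PP FB \<sigma> L else 0)))"
    if sp: "\<sigma> permutes {1..p}" for \<sigma>
  proof -
    have im: "\<sigma> ` set L = {1..p}" using permutes_image[OF sp] setL by simp
    have "U.cg (x * U.PP F \<sigma> L - U.PP F \<sigma> L * x)
       (c * ((if nn \<in> set L then U.PP FA \<sigma> L else 0) + (if nn \<in> \<sigma> ` set L then U.PP FB \<sigma> L else 0)))"
    proof (rule U.leibniz[OF cent FA1 FB1 permutes_inj[OF sp]])
      show "distinct L" unfolding L_def by simp
      fix q assume q: "q \<in> set L"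
      then have q1: "q \<in> {1..p}" using setL by simp
      have k1: "\<sigma> q \<in> {1..p}" using permutes_in_image[OF sp] q1 by simp
      have D: "U.cg (x * vT (- int q) (- int (\<sigma> q)) - vT (- int q) (- int (\<sigma> q)) * x)
        (of_int n * ((if int q = n then vT (- m) (- int (\<sigma> q)) else 0) + (if int (\<sigma> q) = n then vT (- m) (- int q) else 0)))"
        unfolding x_def using comm_D[of d m n "int q" "int (\<sigma> q)" r] assms q1 k1 by simp
      have e1: "(if int q = n then vT (- m) (- int (\<sigma> q)) else 0) = (if q = nn then FA q (\<sigma> q) else 0)"
        unfolding FA_def F_def using n_eq m_eq by auto
      have e2: "(if int (\<sigma> q) = n then vT (- m) (- int q) else 0) = (if \<sigma> q = nn then FB q (\<sigma> q) else 0)"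
        unfolding FB_def F_def using n_eq m_eq q1 mm_in by (auto intro: vT_sym)
      show "U.cg (x * F q (\<sigma> q) - F q (\<sigma> q) * x)
          (c * ((if q = nn then FA q (\<sigma> q) else 0) + (if \<sigma> q = nn then FB q (\<sigma> q) else 0)))"
        using D unfolding e1 e2 F_def c_def .
    qed
    then show ?thesis unfolding im by (simp only: setL)
  qed
  define S where "S = {F q k | q k. q \<in> {1..p} \<and> k \<in> {1..p}}"
  have comm_all: "\<And>a b. a \<in> S \<Longrightarrow> b \<in> S \<Longrightarrow> U.comm a b"
    unfolding S_def F_def using comm_neg[OF assms(1)] by auto
  have inS: "\<And>q k. q \<in> {1..p} \<Longrightarrow> k \<in> {1..p} \<Longrightarrow> FA q k \<in> S"
    unfolding S_def FA_def using mm_in by auto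
  have tm: "x * (of_int k * y) - (of_int k * y) * x = of_int k * (x * y - y * x)" for k y
  proof -
    have "x * (of_int k * y) = of_int k * (x * y)" by (metis mult.assoc mult_of_int_commute)
    then show ?thesis by (simp add: right_diff_distrib mult.assoc)
  qed
  have csum: "x * detV p - detV p * x = (\<Sum>\<sigma>\<in>?P. of_int (sign \<sigma>) * (x * U.PP F \<sigma> L - U.PP F \<sigma> L * x))"
    unfolding det sum_distrib_left sum_distrib_right sum_subtractf[symmetric] tm ..
  have c1: "U.cg (x * detV p - detV p * x)
      (\<Sum>\<sigma>\<in>?P. of_int (sign \<sigma>) * (c * ((if nn \<in> {1..p} then U.PP FA \<sigma> L else 0) + (if nn \<in> {1..p} then U.PP FB \<sigma> L else 0))))"
    unfolding csum by (rule U.cg_sum, rule U.cg_multl, rule trm) simp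
  have fin: "U.cg (x * detV p - detV p * x) 0"
  proof (cases "nn \<in> {1..p}")
    case False
    from c1 show ?thesis by (simp only: if_not_P[OF False] add_0_left mult_zero_right sum.neutral_const)
  next
    case True
    have r1: "of_int k * (c * (y + z)) = c * (of_int k * y) + c * (of_int k * z)" for k y z
    proof -
      have "of_int k * (c * (y + z)) = (of_int k * c) * (y + z)" by (simp only: mult.assoc)
      also have "of_int k * c = c * of_int k" by (rule cent[symmetric])
      finally show ?thesis by (simp only: mult.assoc distrib_left)
    qed
    have E: "(\<Sum>\<sigma>\<in>?P. of_int (sign \<sigma>) * (c * ((if nn \<in> {1..p} then U.PP FA \<sigma> L else 0) + (if nn \<in> {1..p} then U.PP FB \<sigma> L else 0))))
       = c * (\<Sum>\<sigma>\<in>?P. of_int (sign \<sigma>) * U.PP FA \<sigma> L) + c * (\<Sum>\<sigma>\<in>?P. of_int (sign \<sigma>) * U.PP FB \<sigma> L)"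
      by (simp only: if_P[OF True] r1 sum.distrib sum_distrib_left)
    have X: "U.cg (\<Sum>\<sigma>\<in>?P. of_int (sign \<sigma>) * U.PP FA \<sigma> L) 0"
      unfolding L_def
    proof (rule U.det_rows[OF True mm_in mn[symmetric] _ comm_all inS])
      show "FA nn = FA mm" using mn unfolding FA_def by (auto simp: fun_eq_iff)
    qed
    have Y: "(\<Sum>\<sigma>\<in>?P. of_int (sign \<sigma>) * U.PP FB \<sigma> L) = 0"
      unfolding L_def
    proof (rule U.det_cols[OF True mm_in mn[symmetric]])
      fix q show "FB q nn = FB q mm" using mn unfolding FB_def by auto
    qed
    have "U.cg (c * (\<Sum>\<sigma>\<in>?P. of_int (sign \<sigma>) * U.PP FA \<sigma> L) + c * (\<Sum>\<sigma>\<in>?P. of_int (sign \<sigma>) * U.PP FB \<sigma> L)) (c * 0 + c * 0)"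
      unfolding Y by (rule U.cg_add[OF U.cg_multl[OF X] U.cg_refl])
    then have "U.cg (c * (\<Sum>\<sigma>\<in>?P. of_int (sign \<sigma>) * U.PP FA \<sigma> L) + c * (\<Sum>\<sigma>\<in>?P. of_int (sign \<sigma>) * U.PP FB \<sigma> L)) 0"
      by (simp only: mult_zero_right add_0_left)
    then show ?thesis using U.cg_trans[OF c1] unfolding E by blast
  qed
  then show ?thesis unfolding U.cg_def x_def by simp
qed


end
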